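(* Let $X$ be an alphabet, $L\subseteq X^*$, and let $I=Y_0^*\{x_1,\varepsilon\}Y_1^*\cdots\{x_n,\varepsilon\}Y_n^*$ with $Y_0,\dots,Y_n\subseteq X$ and $x_1,\dots,x_n\in X$. Let $m\ge N(L)+1$. Then the following are equivalent: (1) $I\subseteq \downarrow L$; (2) for every $m'\ge N(L)+1$, the word $w_{Y_0}^{m'}x_1w_{Y_1}^{m'}\cdots x_nw_{Y_n}^{m'}$ belongs to $\downarrow L$; (3) the word $w_{Y_0}^{m}x_1w_{Y_1}^{m}\cdots x_nw_{Y_n}^{m}$ belongs to $\downarrow L$.
   Context: $u\preceq v$ denotes the subword ordering on $X^*$ and $\downarrow L=\{u\mid\exists v\in L: u\preceq v\}$. An ideal expression is a finite product of factors, each of the form $Y^*$ with $Y\subseteq X$ (possibly empty, $\emptyset^*=\{\varepsilon\}$) or $\{x,\varepsilon\}$ with $x\in X$; the set it denotes is an ideal, and the length of the expression is its number of factors. Every downward closed language is a finite union of ideals. $N(L)$ denotes the least number $N$ such that $\downarrow L$ is a finite union of ideals each given by an expression of length at most $N$. For $Y\subseteq X$, $w_Y$ denotes a fixed word containing every letter of $Y$ exactly once and no other letters ($w_\emptyset=\varepsilon$). *)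

theory Defs
  imports Main "HOL-Library.Sublist"
begin

text \<open>Subword ordering is the library's subsequence relation subseq (scattered subword).\<close>

definition downclosure :: "'a list set \<Rightarrow> 'a list set" where
  "downclosure L = {u. \<exists>v\<in>L. subseq u v}"

datatype 'a factor = Star "'a set" | Opt 'a

fun factor_lang :: "'a factor \<Rightarrow> 'a list set" where
  "factor_lang (Star Y) = lists Y"
| "factor_lang (Opt x) = {[x], []}"

definition conc :: "'a list set \<Rightarrow> 'a list set \<Rightarrow> 'a list set" where
  "conc A B = {u @ v | u v. u \<in> A \<and> v \<in> B}"

fun expr_lang :: "'a factor list \<Rightarrow> 'a list set" where
  "expr_lang [] = {[]}"
| "expr_lang (f # fs) = conc (factor_lang f) (expr_lang fs)"

fun factor_over :: "'a set \<Rightarrow> 'a factor \<Rightarrow> bool" where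
  "factor_over X (Star Y) = (Y \<subseteq> X)"
| "factor_over X (Opt x) = (x \<in> X)"

definition expr_over :: "'a set \<Rightarrow> 'a factor list \<Rightarrow> bool" where
  "expr_over X e = (\<forall>f\<in>set e. factor_over X f)"

definition N_of :: "'a set \<Rightarrow> 'a list set \<Rightarrow> nat" where
  "N_of X L = (LEAST N. \<exists>E. finite E \<and> (\<forall>e\<in>E. expr_over X e \<and> length e \<le> N)
                 \<and> downclosure L = (\<Union>e\<in>E. expr_lang e))"

fun ideal_expr :: "(nat \<Rightarrow> 'a set) \<Rightarrow> (nat \<Rightarrow> 'a) \<Rightarrow> nat \<Rightarrow> 'a factor list" where
  "ideal_expr Y x 0 = [Star (Y 0)]"
| "ideal_expr Y x (Suc n) = ideal_expr Y x n @ [Opt (x (Suc n)), Star (Y (Suc n))]"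

definition lpow :: "'a list \<Rightarrow> nat \<Rightarrow> 'a list" where
  "lpow u m = concat (replicate m u)"

fun test_word :: "('a set \<Rightarrow> 'a list) \<Rightarrow> (nat \<Rightarrow> 'a set) \<Rightarrow> (nat \<Rightarrow> 'a) \<Rightarrow> nat \<Rightarrow> nat \<Rightarrow> 'a list" where
  "test_word w Y x m 0 = lpow (w (Y 0)) m"
| "test_word w Y x m (Suc n) = test_word w Y x m n @ [x (Suc n)] @ lpow (w (Y (Suc n))) m"

end

theory Submission
  imports Defs "HOL-Library.Infinite_Set"
begin

definition bad :: "(nat \<Rightarrow> 'a list) \<Rightarrow> bool" where
  "bad f = (\<forall>i j. i < j \<longrightarrow> \<not> subseq (f i) (f j))"

definition extendable :: "'a set \<Rightarrow> 'a list list \<Rightarrow> bool" where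
  "extendable X p = (\<exists>f. bad f \<and> (\<forall>i. f i \<in> lists X) \<and> (\<forall>i<length p. f i = p ! i))"

definition cand :: "'a set \<Rightarrow> 'a list list \<Rightarrow> 'a list \<Rightarrow> bool" where
  "cand X p w = (\<exists>f. bad f \<and> (\<forall>i. f i \<in> lists X) \<and> (\<forall>i<length p. f i = p ! i) \<and> f (length p) = w)"

definition choosew :: "'a set \<Rightarrow> 'a list list \<Rightarrow> 'a list" where
  "choosew X p = arg_min length (cand X p)"

primrec pre :: "'a set \<Rightarrow> nat \<Rightarrow> 'a list list" where
  "pre X 0 = []"
| "pre X (Suc n) = pre X n @ [choosew X (pre X n)]"

lemma length_pre[simp]: "length (pre X n) = n"
  by (induct n) auto

lemma pre_nth: "i < n \<Longrightarrow> pre X n ! i = choosew X (pre X i)"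
proof (induct n)
  case (Suc n) then show ?case by (cases "i = n") (auto simp: nth_append)
qed simp

lemma extendable_step:
  assumes "extendable X p" shows "extendable X (p @ [choosew X p])"
proof -
  from assms obtain f where f: "bad f" "\<forall>i. f i \<in> lists X" "\<forall>i<length p. f i = p ! i"
    unfolding extendable_def by blast
  have "cand X p (f (length p))" unfolding cand_def using f by blast
  then have "cand X p (choosew X p)" unfolding choosew_def by (rule arg_min_natI)
  then obtain g where g: "bad g" "\<forall>i. g i \<in> lists X" "\<forall>i<length p. g i = p ! i"
     "g (length p) = choosew X p" unfolding cand_def by blast
  show ?thesis unfolding extendable_def
    by (rule exI[of _ g]) (use g in \<open>auto simp: nth_append less_Suc_eq\<close>)
qed

lemma choose_min:
  assumes "bad g" "\<forall>i. g i \<in> lists X" "\<forall>i<length p. g i = p ! i"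
  shows "length (choosew X p) \<le> length (g (length p))"
proof -
  have "cand X p (g (length p))" unfolding cand_def using assms by blast
  then show ?thesis unfolding choosew_def by (rule arg_min_nat_le)
qed

lemma higman:
  fixes f :: "nat \<Rightarrow> 'a list"
  assumes fin: "finite X" and fX: "\<forall>i. f i \<in> lists X"
  shows "\<exists>i j. i < j \<and> subseq (f i) (f j)"
proof (rule ccontr)
  assume "\<not> ?thesis"
  then have "bad f" unfolding bad_def by blast
  then have ext0: "extendable X (pre X 0)" unfolding extendable_def using fX by auto
  have ext: "extendable X (pre X n)" for n
    by (induct n) (use ext0 extendable_step in auto)
  define m where "m i = choosew X (pre X i)" for i
  have pm: "i < n \<Longrightarrow> pre X n ! i = m i" for i n unfolding m_def by (rule pre_nth)
  have mX: "m i \<in> lists X" for i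
  proof -
    from ext[of "Suc i"] obtain g where g: "bad g" "\<forall>i. g i \<in> lists X" "\<forall>j<Suc i. g j = pre X (Suc i) ! j"
      unfolding extendable_def by auto
    then show ?thesis using pm[of i "Suc i"] by (metis lessI)
  qed
  have mbad: "bad m" unfolding bad_def
  proof (intro allI impI)
    fix i j :: nat assume ij: "i < j"
    from ext[of "Suc j"] obtain g where g: "bad g" "\<forall>i. g i \<in> lists X" "\<forall>k<Suc j. g k = pre X (Suc j) ! k"
      unfolding extendable_def by auto
    have "g i = m i" "g j = m j" using g(3) pm[of _ "Suc j"] ij by auto
    with g(1) ij show "\<not> subseq (m i) (m j)" unfolding bad_def by metis
  qed
  have mne: "m i \<noteq> []" for i
  proof
    assume "m i = []"
    then have "subseq (m i) (m (Suc i))" by simp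
    with mbad show False unfolding bad_def by blast
  qed
  have "finite ((\<lambda>i. hd (m i)) ` UNIV)"
  proof (rule finite_subset[OF _ fin])
    show "range (\<lambda>i. hd (m i)) \<subseteq> X" using mX mne by (metis (no_types, lifting) hd_in_set image_subset_iff in_listsD)
  qed
  then obtain i0 where "infinite {i. hd (m i) = hd (m i0)}"
    using pigeonhole_infinite[of "UNIV :: nat set" "\<lambda>i. hd (m i)"] by auto
  then obtain S a where S: "infinite S" "\<forall>i\<in>S. hd (m i) = a" by blast
  define \<phi> where "\<phi> = enumerate S"
  have phiS: "\<phi> i \<in> S" for i unfolding \<phi>_def using S enumerate_in_set by blast
  have phimono: "i < j \<Longrightarrow> \<phi> i < \<phi> j" for i j unfolding \<phi>_def using S enumerate_mono by blast
  have phige: "\<phi> 0 \<le> \<phi> i" for i using phimono[of 0 i] by (cases i) auto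
  define k where "k = \<phi> 0"
  define g where "g i = (if i < k then m i else tl (m (\<phi> (i - k))))" for i
  have mcons: "m (\<phi> i) = a # tl (m (\<phi> i))" for i
    using mne[of "\<phi> i"] S(2) phiS[of i] by (cases "m (\<phi> i)") auto
  have gX: "\<forall>i. g i \<in> lists X" unfolding g_def using mX mcons
    by (metis list.set_sel(2) in_listsD in_listsI mne)
  have gbad: "bad g" unfolding bad_def
  proof (intro allI impI)
    fix i j :: nat assume ij: "i < j"
    show "\<not> subseq (g i) (g j)"
    proof (cases "j < k")
      case True then show ?thesis using ij mbad unfolding g_def bad_def by auto
    next
      case jk: False
      show ?thesis
      proof (cases "i < k")
        case True
        have "i < \<phi> (j - k)" using True phige[of "j-k"] k_def by linarith
        then have "\<not> subseq (m i) (m (\<phi> (j - k)))" using mbad unfolding bad_def by blast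
        moreover have "subseq (tl (m (\<phi> (j - k)))) (m (\<phi> (j - k)))"
          by (metis mcons subseq_Cons' subseq_order.order_refl)
        ultimately show ?thesis using True jk unfolding g_def
          using subseq_order.order_trans by auto
      next
        case False
        have "\<phi> (i - k) < \<phi> (j - k)" using phimono False ij jk by simp
        then have "\<not> subseq (m (\<phi> (i - k))) (m (\<phi> (j - k)))" using mbad unfolding bad_def by blast
        then show ?thesis using False jk unfolding g_def
          by (metis mcons subseq_Cons2)
      qed
    qed
  qed
  have gpre: "\<forall>i<length (pre X k). g i = pre X k ! i" using pm unfolding g_def by auto
  have "length (choosew X (pre X k)) \<le> length (g (length (pre X k)))"
    by (rule choose_min[OF gbad gX gpre])
  moreover have "g k = tl (m k)" by (simp add: g_def k_def)
  ultimately show False using mne[of k] unfolding m_def by (cases "choosew X (pre X k)") auto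
qed

lemma mem_cons: "w \<in> expr_lang (f # r) \<longleftrightarrow> (\<exists>a b. w = a @ b \<and> a \<in> factor_lang f \<and> b \<in> expr_lang r)"
  by (auto simp: conc_def)

lemma nil_in[simp]: "[] \<in> expr_lang e"
proof (induct e)
  case (Cons f r) then show ?case by (cases f) (auto simp: conc_def)
qed simp

lemma lang_cons_sub: "w \<in> expr_lang r \<Longrightarrow> w \<in> expr_lang (f # r)"
  by (cases f) (auto simp: conc_def intro: exI[of _ "[]"])

lemma factor_down: "subseq u v \<Longrightarrow> v \<in> factor_lang f \<Longrightarrow> u \<in> factor_lang f"
proof (cases f)
  case (Star Y) assume "subseq u v" "v \<in> factor_lang f"
  then show ?thesis using Star by (auto elim: list_emb_set)
next
  case (Opt x) assume "subseq u v" "v \<in> factor_lang f"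
  then show ?thesis using Opt by (auto simp: subseq_singleton_left)
      (metis list_emb_Nil2 list_emb_length length_Cons list.size(3) le_Suc_eq le_zero_eq
       subseq_same_length length_0_conv)
qed

lemma expr_down: "subseq u v \<Longrightarrow> v \<in> expr_lang e \<Longrightarrow> u \<in> expr_lang e"
proof (induct e arbitrary: u v)
  case Nil then show ?case by auto
next
  case (Cons f r)
  then obtain a b where ab: "v = a @ b" "a \<in> factor_lang f" "b \<in> expr_lang r" using Cons(3) unfolding mem_cons by blast
  with Cons(2) obtain u1 u2 where "u = u1 @ u2" "subseq u1 a" "subseq u2 b" by (auto elim: subseq_appendE)
  then show ?case using ab Cons(1) factor_down unfolding mem_cons by blast
qed

lemma lang_lists: "expr_over X e \<Longrightarrow> expr_lang e \<subseteq> lists X"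
proof (induct e)
  case (Cons f r)
  then have "expr_lang r \<subseteq> lists X" "factor_over X f" by (auto simp: expr_over_def)
  then show ?case by (cases f) (auto simp: conc_def, (meson in_listsD subsetD)+)
qed simp

fun einter :: "'a factor list \<Rightarrow> 'a factor list \<Rightarrow> 'a factor list set" where
  "einter [] e = {[]}"
| "einter (f # r) [] = {[]}"
| "einter (Opt a # r1) (Opt b # r2) = einter r1 (Opt b # r2) \<union> einter (Opt a # r1) r2 \<union>
     (if a = b then Cons (Opt a) ` einter r1 r2 else {})"
| "einter (Opt a # r1) (Star Z # r2) = einter r1 (Star Z # r2) \<union> einter (Opt a # r1) r2 \<union>
     (if a \<in> Z then Cons (Opt a) ` einter r1 (Star Z # r2) else {})"
| "einter (Star Y # r1) (Opt b # r2) = einter (Star Y # r1) r2 \<union> einter r1 (Opt b # r2) \<union>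
     (if b \<in> Y then Cons (Opt b) ` einter (Star Y # r1) r2 else {})"
| "einter (Star Y # r1) (Star Z # r2) = Cons (Star (Y \<inter> Z)) ` (einter r1 (Star Z # r2) \<union> einter (Star Y # r1) r2)"

lemma inter_finite: "finite (einter e1 e2)"
  by (induct e1 e2 rule: einter.induct) simp_all

lemma over_cons[simp]: "expr_over X (f # r) \<longleftrightarrow> factor_over X f \<and> expr_over X r"
  by (simp add: expr_over_def)

lemma over_nil[simp]: "expr_over X []" by (simp add: expr_over_def)

lemma inter_over_all: "expr_over X e1 \<Longrightarrow> expr_over X e2 \<Longrightarrow> \<forall>s\<in>einter e1 e2. expr_over X s"
proof (induct e1 e2 rule: einter.induct)
  case (3 a r1 b r2)
  from 3(4,5) have o: "expr_over X r1" "expr_over X r2" "a \<in> X" "b \<in> X" by simp_all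
  have i1: "\<forall>s\<in>einter r1 (Opt b # r2). expr_over X s" using 3(1) o 3(5) by blast
  have i2: "\<forall>s\<in>einter (Opt a#r1) r2. expr_over X s" using 3(2) 3(4) o by blast
  have i3: "a=b \<Longrightarrow> \<forall>s\<in>einter r1 r2. expr_over X s" using 3(3) o by blast
  show ?case unfolding einter.simps using i1 i2 i3 o by auto
next
  case (4 a r1 Z r2)
  from 4(4,5) have o: "expr_over X r1" "expr_over X r2" "a \<in> X" "Z \<subseteq> X" by simp_all
  have i1: "\<forall>s\<in>einter r1 (Star Z # r2). expr_over X s" using 4(1) o 4(5) by blast
  have i2: "\<forall>s\<in>einter (Opt a#r1) r2. expr_over X s" using 4(2) 4(4) o by blast
  have i3: "a \<in> Z \<Longrightarrow> \<forall>s\<in>einter r1 (Star Z # r2). expr_over X s" using 4(3) o 4(5) by blast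
  show ?case unfolding einter.simps using i1 i2 i3 o by auto
next
  case (5 Y r1 b r2)
  from 5(4,5) have o: "expr_over X r1" "expr_over X r2" "b \<in> X" "Y \<subseteq> X" by simp_all
  have i1: "\<forall>s\<in>einter (Star Y # r1) r2. expr_over X s" using 5(1) o 5(4) by blast
  have i2: "\<forall>s\<in>einter r1 (Opt b # r2). expr_over X s" using 5(2) 5(5) o by blast
  have i3: "b \<in> Y \<Longrightarrow> \<forall>s\<in>einter (Star Y # r1) r2. expr_over X s" using 5(3) o 5(4) by blast
  show ?case unfolding einter.simps using i1 i2 i3 o by auto
next
  case (6 Y r1 Z r2)
  from 6(3,4) have o: "expr_over X r1" "expr_over X r2" "Y \<subseteq> X" "Z \<subseteq> X" by simp_all
  have i1: "\<forall>s\<in>einter r1 (Star Z # r2). expr_over X s" using 6(1) o 6(4) by blast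
  have i2: "\<forall>s\<in>einter (Star Y # r1) r2. expr_over X s" using 6(2) 6(3) o by blast
  show ?case unfolding einter.simps using i1 i2 o by auto
qed simp_all
lemma inter_over: "expr_over X e1 \<Longrightarrow> expr_over X e2 \<Longrightarrow> s \<in> einter e1 e2 \<Longrightarrow> expr_over X s"
  using inter_over_all by blast

lemma mem_star: "w \<in> expr_lang (Star Y # r) \<longleftrightarrow> (\<exists>a b. w = a @ b \<and> a \<in> lists Y \<and> b \<in> expr_lang r)"
  by (auto simp: conc_def)

lemma mem_opt: "w \<in> expr_lang (Opt x # r) \<longleftrightarrow> w \<in> expr_lang r \<or> (\<exists>b. w = x # b \<and> b \<in> expr_lang r)"
  by (auto simp: conc_def) (metis append_Cons append_Nil)

lemma inter_sound: "s \<in> einter e1 e2 \<Longrightarrow> w \<in> expr_lang s \<Longrightarrow> w \<in> expr_lang e1 \<and> w \<in> expr_lang e2"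
proof (induct e1 e2 arbitrary: s w rule: einter.induct)
  case (1 e) then show ?case by simp
next
  case (2 f r) then have "w = []" by simp
  then show ?case using nil_in by blast
next
  case (3 a r1 b r2)
  show ?case using 3(4) unfolding einter.simps
  proof (elim UnE)
    assume "s \<in> einter r1 (Opt b # r2)" then show ?thesis using 3(1) 3(5) lang_cons_sub by blast
  next
    assume "s \<in> einter (Opt a # r1) r2" then show ?thesis using 3(2) 3(5) lang_cons_sub by blast
  next
    assume s: "s \<in> (if a = b then Cons (Opt a) ` einter r1 r2 else {})"
    then obtain s' where ss: "a = b" "s = Opt a # s'" "s' \<in> einter r1 r2" by (auto split: if_splits)
    have "w \<in> expr_lang (Opt a # s')" using 3(5) ss(2) by (simp only:)
    then have "w \<in> expr_lang s' \<or> (\<exists>c. w = a # c \<and> c \<in> expr_lang s')" unfolding mem_opt .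
    then show ?thesis using 3(3)[OF ss(1,3)] ss(1) unfolding mem_opt by blast
  qed
next
  case (4 a r1 Z r2)
  show ?case using 4(4) unfolding einter.simps
  proof (elim UnE)
    assume "s \<in> einter r1 (Star Z # r2)" then show ?thesis using 4(1) 4(5) lang_cons_sub by blast
  next
    assume "s \<in> einter (Opt a # r1) r2" then show ?thesis using 4(2) 4(5) lang_cons_sub by blast
  next
    assume s: "s \<in> (if a \<in> Z then Cons (Opt a) ` einter r1 (Star Z # r2) else {})"
    then obtain s' where az: "a \<in> Z" "s = Opt a # s'" "s' \<in> einter r1 (Star Z # r2)" by (auto split: if_splits)
    have "w \<in> expr_lang (Opt a # s')" using 4(5) az(2) by (simp only:)
    then have "w \<in> expr_lang s' \<or> (\<exists>b. w = a # b \<and> b \<in> expr_lang s')" unfolding mem_opt .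
    then show ?thesis
    proof
      assume "w \<in> expr_lang s'" then show ?thesis using 4(3) az lang_cons_sub by blast
    next
      assume "\<exists>b. w = a # b \<and> b \<in> expr_lang s'"
      then obtain b where b: "w = a # b" "b \<in> expr_lang s'" by blast
      then have "b \<in> expr_lang r1" "b \<in> expr_lang (Star Z # r2)" using 4(3)[OF az(1,3)] by auto
      then obtain c d where cd: "b = c @ d" "c \<in> lists Z" "d \<in> expr_lang r2" unfolding mem_star by blast
      have "w \<in> expr_lang (Opt a # r1)" using b(1) `b \<in> expr_lang r1` unfolding mem_opt by blast
      moreover have "w = (a # c) @ d" "a # c \<in> lists Z" using cd b(1) az(1) by auto
      then have "w \<in> expr_lang (Star Z # r2)" using cd(3) unfolding mem_star by blast
      ultimately show ?thesis by blast
    qed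
  qed
next
  case (5 Y r1 b r2)
  show ?case using 5(4) unfolding einter.simps
  proof (elim UnE)
    assume "s \<in> einter (Star Y # r1) r2" then show ?thesis using 5(1) 5(5) lang_cons_sub by blast
  next
    assume "s \<in> einter r1 (Opt b # r2)" then show ?thesis using 5(2) 5(5) lang_cons_sub by blast
  next
    assume s: "s \<in> (if b \<in> Y then Cons (Opt b) ` einter (Star Y # r1) r2 else {})"
    then obtain s' where az: "b \<in> Y" "s = Opt b # s'" "s' \<in> einter (Star Y # r1) r2" by (auto split: if_splits)
    have "w \<in> expr_lang (Opt b # s')" using 5(5) az(2) by (simp only:)
    then have "w \<in> expr_lang s' \<or> (\<exists>c. w = b # c \<and> c \<in> expr_lang s')" unfolding mem_opt .
    then show ?thesis
    proof
      assume "w \<in> expr_lang s'" then show ?thesis using 5(3) az lang_cons_sub by blast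
    next
      assume "\<exists>c. w = b # c \<and> c \<in> expr_lang s'"
      then obtain c where c: "w = b # c" "c \<in> expr_lang s'" by blast
      then have "c \<in> expr_lang r2" "c \<in> expr_lang (Star Y # r1)" using 5(3)[OF az(1,3)] by auto
      then obtain c1 d where cd: "c = c1 @ d" "c1 \<in> lists Y" "d \<in> expr_lang r1" unfolding mem_star by blast
      have "w \<in> expr_lang (Opt b # r2)" using c(1) `c \<in> expr_lang r2` unfolding mem_opt by blast
      moreover have "w = (b # c1) @ d" "b # c1 \<in> lists Y" using cd c(1) az(1) by auto
      then have "w \<in> expr_lang (Star Y # r1)" using cd(3) unfolding mem_star by blast
      ultimately show ?thesis by blast
    qed
  qed
next
  case (6 Y r1 Z r2)
  obtain s' where s': "s = Star (Y \<inter> Z) # s'" "s' \<in> einter r1 (Star Z # r2) \<or> s' \<in> einter (Star Y # r1) r2" using 6(3) unfolding einter.simps by (auto simp only: image_iff Un_iff)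
  have "w \<in> expr_lang (Star (Y \<inter> Z) # s')" using 6(4) s'(1) by (simp only:)
  then obtain a b where ab: "w = a @ b" "a \<in> lists (Y \<inter> Z)" "b \<in> expr_lang s'" unfolding mem_star by blast
  from s'(2) show ?case
  proof
    assume "s' \<in> einter r1 (Star Z # r2)"
    then have "b \<in> expr_lang r1" "b \<in> expr_lang (Star Z # r2)" using 6(1) ab(3) by blast+
    then obtain c d where cd: "b = c @ d" "c \<in> lists Z" "d \<in> expr_lang r2" unfolding mem_star by blast
    have "a \<in> lists Y" "a \<in> lists Z" using ab(2) by auto
    have "w \<in> expr_lang (Star Y # r1)" using ab(1) `a \<in> lists Y` `b \<in> expr_lang r1` unfolding mem_star by blast
    moreover have "w = (a @ c) @ d" "a @ c \<in> lists Z" using ab(1) cd `a \<in> lists Z` by auto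
    then have "w \<in> expr_lang (Star Z # r2)" using cd(3) unfolding mem_star by blast
    ultimately show ?thesis by blast
  next
    assume "s' \<in> einter (Star Y # r1) r2"
    then have "b \<in> expr_lang r2" "b \<in> expr_lang (Star Y # r1)" using 6(2) ab(3) by blast+
    then obtain c d where cd: "b = c @ d" "c \<in> lists Y" "d \<in> expr_lang r1" unfolding mem_star by blast
    have "a \<in> lists Y" "a \<in> lists Z" using ab(2) by auto
    have "w \<in> expr_lang (Star Z # r2)" using ab(1) `a \<in> lists Z` `b \<in> expr_lang r2` unfolding mem_star by blast
    moreover have "w = (a @ c) @ d" "a @ c \<in> lists Y" using ab(1) cd `a \<in> lists Y` by auto
    then have "w \<in> expr_lang (Star Y # r1)" using cd(3) unfolding mem_star by blast
    ultimately show ?thesis by blast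
  qed
qed


lemma inter_complete: "w \<in> expr_lang e1 \<Longrightarrow> w \<in> expr_lang e2 \<Longrightarrow> \<exists>s\<in>einter e1 e2. w \<in> expr_lang s"
proof (induct e1 e2 arbitrary: w rule: einter.induct)
  case (1 e) then show ?case by simp
next
  case (2 f r) then show ?case by simp
next
  case (3 a r1 b r2)
  have h1: "w \<in> expr_lang r1 \<or> (\<exists>v. w = a # v \<and> v \<in> expr_lang r1)" using 3(4) unfolding mem_opt .
  have h2: "w \<in> expr_lang r2 \<or> (\<exists>v. w = b # v \<and> v \<in> expr_lang r2)" using 3(5) unfolding mem_opt .
  show ?case
  proof (cases "w \<in> expr_lang r1")
    case True then show ?thesis using 3(1)[OF True 3(5)] unfolding einter.simps by blast
  next
    case F1: False
    then obtain v where v: "w = a # v" "v \<in> expr_lang r1" using h1 by blast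
    show ?thesis
    proof (cases "w \<in> expr_lang r2")
      case True then show ?thesis using 3(2)[OF 3(4) True] unfolding einter.simps by blast
    next
      case False
      then obtain v' where v': "w = b # v'" "v' \<in> expr_lang r2" using h2 by blast
      then have ab: "a = b" "v' = v" using v by auto
      obtain s where s: "s \<in> einter r1 r2" "v \<in> expr_lang s" using 3(3)[OF ab(1) v(2)] v' ab by blast
      have "w \<in> expr_lang (Opt a # s)" unfolding mem_opt using v s by blast
      moreover have "Opt a # s \<in> einter (Opt a # r1) (Opt b # r2)" using ab s by simp
      ultimately show ?thesis by blast
    qed
  qed
next
  case (4 a r1 Z r2)
  have h1: "w \<in> expr_lang r1 \<or> (\<exists>v. w = a # v \<and> v \<in> expr_lang r1)" using 4(4) unfolding mem_opt .
  obtain c d where cd: "w = c @ d" "c \<in> lists Z" "d \<in> expr_lang r2" using 4(5) unfolding mem_star by blast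
  show ?case
  proof (cases "w \<in> expr_lang r1")
    case True then show ?thesis using 4(1)[OF True 4(5)] unfolding einter.simps by blast
  next
    case F1: False
    then obtain v where v: "w = a # v" "v \<in> expr_lang r1" using h1 by blast
    show ?thesis
    proof (cases c)
      case Nil
      then have "w \<in> expr_lang r2" using cd by simp
      then show ?thesis using 4(2)[OF 4(4)] unfolding einter.simps by blast
    next
      case (Cons c0 c')
      then have az: "a \<in> Z" "v = c' @ d" "c' \<in> lists Z" using cd v by auto
      then have "v \<in> expr_lang (Star Z # r2)" using cd(3) unfolding mem_star by blast
      then obtain s where s: "s \<in> einter r1 (Star Z # r2)" "v \<in> expr_lang s" using 4(3)[OF az(1) v(2)] by blast
      have "w \<in> expr_lang (Opt a # s)" unfolding mem_opt using v s by blast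
      moreover have "Opt a # s \<in> einter (Opt a # r1) (Star Z # r2)" using az s by simp
      ultimately show ?thesis by blast
    qed
  qed
next
  case (5 Y r1 b r2)
  have h1: "w \<in> expr_lang r2 \<or> (\<exists>v. w = b # v \<and> v \<in> expr_lang r2)" using 5(5) unfolding mem_opt .
  obtain c d where cd: "w = c @ d" "c \<in> lists Y" "d \<in> expr_lang r1" using 5(4) unfolding mem_star by blast
  show ?case
  proof (cases "w \<in> expr_lang r2")
    case True then show ?thesis using 5(1)[OF 5(4) True] unfolding einter.simps by blast
  next
    case F1: False
    then obtain v where v: "w = b # v" "v \<in> expr_lang r2" using h1 by blast
    show ?thesis
    proof (cases c)
      case Nil
      then have "w \<in> expr_lang r1" using cd by simp
      then show ?thesis using 5(2)[OF _ 5(5)] unfolding einter.simps by blast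
    next
      case (Cons c0 c')
      then have az: "b \<in> Y" "v = c' @ d" "c' \<in> lists Y" using cd v by auto
      then have "v \<in> expr_lang (Star Y # r1)" using cd(3) unfolding mem_star by blast
      then obtain s where s: "s \<in> einter (Star Y # r1) r2" "v \<in> expr_lang s" using 5(3)[OF az(1) _ v(2)] by blast
      have "w \<in> expr_lang (Opt b # s)" unfolding mem_opt using v s by blast
      moreover have "Opt b # s \<in> einter (Star Y # r1) (Opt b # r2)" using az s by simp
      ultimately show ?thesis by blast
    qed
  qed
next
  case (6 Y r1 Z r2)
  obtain a1 b1 where 1: "w = a1 @ b1" "a1 \<in> lists Y" "b1 \<in> expr_lang r1" using 6(3) unfolding mem_star by blast
  obtain a2 b2 where 2: "w = a2 @ b2" "a2 \<in> lists Z" "b2 \<in> expr_lang r2" using 6(4) unfolding mem_star by blast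
  from 1(1) 2(1) obtain us where "(a1 = a2 @ us \<and> us @ b1 = b2) \<or> (a1 @ us = a2 \<and> b1 = us @ b2)"
    using append_eq_append_conv2[of a1 b1 a2 b2] by auto
  then show ?case
  proof
    assume A: "a1 = a2 @ us \<and> us @ b1 = b2"
    then have "a2 \<in> lists (Y \<inter> Z)" "us \<in> lists Y" using 1(2) 2(2) by auto
    have "b2 \<in> expr_lang (Star Y # r1)" using A `us \<in> lists Y` 1(3) unfolding mem_star by blast
    then obtain s where s: "s \<in> einter (Star Y # r1) r2" "b2 \<in> expr_lang s" using 6(2)[OF _ 2(3)] by blast
    have "w \<in> expr_lang (Star (Y \<inter> Z) # s)" unfolding mem_star using 2(1) `a2 \<in> lists (Y \<inter> Z)` s(2) by blast
    moreover have "Star (Y \<inter> Z) # s \<in> einter (Star Y # r1) (Star Z # r2)" using s by simp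
    ultimately show ?thesis by blast
  next
    assume A: "a1 @ us = a2 \<and> b1 = us @ b2"
    then have "a1 \<in> lists (Y \<inter> Z)" "us \<in> lists Z" using 1(2) 2(2) by auto
    have "b1 \<in> expr_lang (Star Z # r2)" using A `us \<in> lists Z` 2(3) unfolding mem_star by blast
    then obtain s where s: "s \<in> einter r1 (Star Z # r2)" "b1 \<in> expr_lang s" using 6(1)[OF 1(3)] by blast
    have "w \<in> expr_lang (Star (Y \<inter> Z) # s)" unfolding mem_star using 1(1) `a1 \<in> lists (Y \<inter> Z)` s(2) by blast
    moreover have "Star (Y \<inter> Z) # s \<in> einter (Star Y # r1) (Star Z # r2)" using s by simp
    ultimately show ?thesis by blast
  qed
qed

fun avoid :: "'a set \<Rightarrow> 'a list \<Rightarrow> 'a factor list set" where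
  "avoid X [] = {}"
| "avoid X (a # u) = insert [Star (X - {a})] (Cons (Star (X - {a})) ` Cons (Opt a) ` avoid X u)"

lemma avoid_finite: "finite (avoid X u)"
  by (induct u) auto

lemma avoid_over: "set u \<subseteq> X \<Longrightarrow> e \<in> avoid X u \<Longrightarrow> expr_over X e"
  by (induct u arbitrary: e) auto

lemma subseq_skip: "a \<notin> set s \<Longrightarrow> subseq (a # u) (s @ r) \<Longrightarrow> subseq (a # u) r"
proof (induct s)
  case (Cons b s)
  then have "a \<noteq> b" by auto
  with Cons show ?case by simp
qed simp

lemma avoid_sound: "set u \<subseteq> X \<Longrightarrow> e \<in> avoid X u \<Longrightarrow> v \<in> expr_lang e \<Longrightarrow> \<not> subseq u v"
proof (induct u arbitrary: e v)
  case Nil then show ?case by simp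
next
  case (Cons a u)
  from Cons(3) have "e = [Star (X - {a})] \<or> (\<exists>e'. e = Star (X - {a}) # Opt a # e' \<and> e' \<in> avoid X u)" by auto
  then show ?case
  proof
    assume e: "e = [Star (X - {a})]"
    then have "v \<in> lists (X - {a})" using Cons(4) by (auto simp: conc_def)
    then have "a \<notin> set v" by auto
    show ?thesis
    proof
      assume "subseq (a # u) v"
      then obtain y where "y \<in> set v" "a = y" using list_emb_set[of "(=)" "a#u" v a] by auto
      then show False using `a \<notin> set v` by simp
    qed
  next
    assume "\<exists>e'. e = Star (X - {a}) # Opt a # e' \<and> e' \<in> avoid X u"
    then obtain e' where e: "e = Star (X - {a}) # Opt a # e'" "e' \<in> avoid X u" by blast
    have "v \<in> expr_lang (Star (X - {a}) # Opt a # e')" using Cons(4) e(1) by (simp only:)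
    then obtain s r where sr: "v = s @ r" "s \<in> lists (X - {a})" "r \<in> expr_lang (Opt a # e')" unfolding mem_star by blast
    from sr(3) have "r \<in> expr_lang e' \<or> (\<exists>t. r = a # t \<and> t \<in> expr_lang e')" unfolding mem_opt .
    moreover have "a \<notin> set s" using sr(2) by auto
    ultimately have disj: "(r \<in> expr_lang e' \<and> a \<notin> set s) \<or> (\<exists>t. r = a # t \<and> t \<in> expr_lang e' \<and> a \<notin> set s)" by blast
    have su: "set u \<subseteq> X" using Cons(2) by simp
    have IH: "t \<in> expr_lang e' \<Longrightarrow> \<not> subseq u t" for t using Cons(1)[OF su e(2)] by blast
    from disj show ?thesis
    proof (elim disjE exE conjE)
      assume r: "r \<in> expr_lang e'" "a \<notin> set s"
      show ?thesis
      proof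
        assume "subseq (a # u) v"
        then have "subseq (a # u) (s @ r)" unfolding sr(1) .
        then have "subseq (a # u) r" by (rule subseq_skip[OF r(2)])
        then have "subseq u r" by (rule subseq_Cons')
        then show False using IH r(1) by blast
      qed
    next
      fix t assume r: "r = a # t" "t \<in> expr_lang e'" "a \<notin> set s"
      show ?thesis
      proof
        assume "subseq (a # u) v"
        then have "subseq (a # u) (s @ a # t)" unfolding sr(1) r(1) .
        then have "subseq (a # u) (a # t)" by (rule subseq_skip[OF r(3)])
        then have "subseq u t" by (rule subseq_Cons2')
        then show False using IH r(2) by blast
      qed
    qed
  qed
qed

lemma mem_starI: "a \<in> lists Y \<Longrightarrow> b \<in> expr_lang r \<Longrightarrow> a @ b \<in> expr_lang (Star Y # r)"
  unfolding mem_star by blast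

lemma mem_optI: "b \<in> expr_lang r \<Longrightarrow> x # b \<in> expr_lang (Opt x # r)"
  unfolding mem_opt by blast

lemma avoid_complete: "v \<in> lists X \<Longrightarrow> \<not> subseq u v \<Longrightarrow> \<exists>e\<in>avoid X u. v \<in> expr_lang e"
proof (induct u arbitrary: v)
  case Nil then show ?case by simp
next
  case (Cons a u)
  show ?case
  proof (cases "a \<in> set v")
    case False
    then have "v \<in> lists (X - {a})" using Cons(2) by auto
    then have "v @ [] \<in> expr_lang [Star (X - {a})]" by (rule mem_starI) simp
    then have "v \<in> expr_lang [Star (X - {a})]" by (simp only: append_Nil2)
    moreover have "[Star (X - {a})] \<in> avoid X (a # u)" by simp
    ultimately show ?thesis by blast
  next
    case True
    then obtain s t where st: "v = s @ a # t" "a \<notin> set s" by (meson split_list_first)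
    have "\<not> subseq u t"
    proof
      assume "subseq u t"
      then have "subseq (a # u) (a # t)" by (rule subseq_Cons2)
      then have "subseq (a # u) (s @ a # t)" by (rule subseq_drop_many)
      then show False using Cons(3) unfolding st(1) by blast
    qed
    moreover have "t \<in> lists X" using Cons(2) st(1) by auto
    ultimately obtain e where e: "e \<in> avoid X u" "t \<in> expr_lang e" using Cons(1) by blast
    have "s \<in> lists (X - {a})" using Cons(2) st by auto
    have "a # t \<in> expr_lang (Opt a # e)" using e(2) by (rule mem_optI)
    then have "s @ a # t \<in> expr_lang (Star (X - {a}) # Opt a # e)" by (rule mem_starI[OF `s \<in> lists (X - {a})`])
    then have "v \<in> expr_lang (Star (X - {a}) # Opt a # e)" unfolding st(1) .
    moreover have "Star (X - {a}) # Opt a # e \<in> avoid X (a # u)" using e(1) by simp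
    ultimately show ?thesis by blast
  qed
qed

definition repr :: "'a set \<Rightarrow> 'a list set \<Rightarrow> bool" where
  "repr X S = (\<exists>E. finite E \<and> (\<forall>e\<in>E. expr_over X e) \<and> S = (\<Union>e\<in>E. expr_lang e))"

lemma repr_inter: assumes "repr X S" "repr X T" shows "repr X (S \<inter> T)"
proof -
  obtain E1 where E1: "finite E1" "\<forall>e\<in>E1. expr_over X e" "S = (\<Union>e\<in>E1. expr_lang e)" using assms(1) unfolding repr_def by blast
  obtain E2 where E2: "finite E2" "\<forall>e\<in>E2. expr_over X e" "T = (\<Union>e\<in>E2. expr_lang e)" using assms(2) unfolding repr_def by blast
  define E where "E = (\<Union>e1\<in>E1. \<Union>e2\<in>E2. einter e1 e2)"
  have "finite E" unfolding E_def using E1(1) E2(1) by (simp add: inter_finite)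
  moreover have "\<forall>e\<in>E. expr_over X e"
  proof
    fix e assume "e \<in> E"
    then obtain e1 e2 where ee: "e1 \<in> E1" "e2 \<in> E2" "e \<in> einter e1 e2" unfolding E_def by blast
    have "expr_over X e1" "expr_over X e2" using ee E1(2) E2(2) by auto
    then show "expr_over X e" using ee(3) by (rule inter_over)
  qed
  moreover have "S \<inter> T = (\<Union>e\<in>E. expr_lang e)"
  proof
    show "S \<inter> T \<subseteq> (\<Union>e\<in>E. expr_lang e)"
    proof
      fix w assume w: "w \<in> S \<inter> T"
      then obtain e1 where e1: "e1 \<in> E1" "w \<in> expr_lang e1" using E1(3) by blast
      obtain e2 where e2: "e2 \<in> E2" "w \<in> expr_lang e2" using w E2(3) by blast
      obtain s where s: "s \<in> einter e1 e2" "w \<in> expr_lang s" using inter_complete[OF e1(2) e2(2)] by blast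
      have "s \<in> E" unfolding E_def using e1(1) e2(1) s(1) by blast
      then show "w \<in> (\<Union>e\<in>E. expr_lang e)" using s(2) by blast
    qed
    show "(\<Union>e\<in>E. expr_lang e) \<subseteq> S \<inter> T"
    proof
      fix w assume "w \<in> (\<Union>e\<in>E. expr_lang e)"
      then obtain s where s: "s \<in> E" "w \<in> expr_lang s" by blast
      then obtain e1 e2 where ee: "e1 \<in> E1" "e2 \<in> E2" "s \<in> einter e1 e2" unfolding E_def by blast
      have "w \<in> expr_lang e1" "w \<in> expr_lang e2" using inter_sound[OF ee(3) s(2)] by auto
      then show "w \<in> S \<inter> T" using ee E1(3) E2(3) by blast
    qed
  qed
  ultimately show ?thesis unfolding repr_def by blast
qed

lemma repr_avoid: assumes u: "set u \<subseteq> X" shows "repr X {v \<in> lists X. \<not> subseq u v}"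
proof -
  have "{v \<in> lists X. \<not> subseq u v} = (\<Union>e\<in>avoid X u. expr_lang e)"
  proof
    show "{v \<in> lists X. \<not> subseq u v} \<subseteq> (\<Union>e\<in>avoid X u. expr_lang e)"
    proof
      fix v assume "v \<in> {v \<in> lists X. \<not> subseq u v}"
      then have "v \<in> lists X" "\<not> subseq u v" by auto
      then obtain e where "e \<in> avoid X u" "v \<in> expr_lang e" using avoid_complete by metis
      then show "v \<in> (\<Union>e\<in>avoid X u. expr_lang e)" by (rule UN_I)
    qed
    show "(\<Union>e\<in>avoid X u. expr_lang e) \<subseteq> {v \<in> lists X. \<not> subseq u v}"
    proof
      fix v assume "v \<in> (\<Union>e\<in>avoid X u. expr_lang e)"
      then obtain e where e: "e \<in> avoid X u" "v \<in> expr_lang e" by (rule UN_E)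
      have "\<not> subseq u v" by (rule avoid_sound[OF u e])
      moreover have "v \<in> lists X" using lang_lists[OF avoid_over[OF u e(1)]] e(2) by (rule subsetD)
      ultimately show "v \<in> {v \<in> lists X. \<not> subseq u v}" by simp
    qed
  qed
  moreover have "\<forall>e\<in>avoid X u. expr_over X e" using avoid_over[OF u] by (intro ballI)
  ultimately show ?thesis unfolding repr_def using avoid_finite by (intro exI[of _ "avoid X u"]) simp
qed

lemma repr_lists: "repr X (lists X)"
proof -
  have "lists X = expr_lang [Star X]"
  proof
    show "lists X \<subseteq> expr_lang [Star X]"
    proof
      fix w assume "w \<in> lists X"
      then have "w @ [] \<in> expr_lang [Star X]" by (rule mem_starI) simp
      then show "w \<in> expr_lang [Star X]" by (simp only: append_Nil2)
    qed
    show "expr_lang [Star X] \<subseteq> lists X" using lang_lists[of X "[Star X]"] by (simp add: expr_over_def)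
  qed
  then show ?thesis unfolding repr_def by (intro exI[of _ "{[Star X]}"]) (auto simp: expr_over_def)
qed

lemma repr_avoid_set: "finite M \<Longrightarrow> M \<subseteq> lists X \<Longrightarrow> repr X {v \<in> lists X. \<forall>u\<in>M. \<not> subseq u v}"
proof (induct M rule: finite_induct)
  case empty then show ?case using repr_lists by simp
next
  case (insert u M)
  have eq: "{v \<in> lists X. \<forall>u'\<in>insert u M. \<not> subseq u' v} =
        {v \<in> lists X. \<not> subseq u v} \<inter> {v \<in> lists X. \<forall>u\<in>M. \<not> subseq u v}" by auto
  have su: "set u \<subseteq> X" using insert(4) by auto
  have "repr X {v \<in> lists X. \<forall>u\<in>M. \<not> subseq u v}" using insert by auto
  then show ?case unfolding eq by (rule repr_inter[OF repr_avoid[OF su]])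
qed

lemma decomp:
  assumes fin: "finite X" and DX: "D \<subseteq> lists X" and down: "\<And>u v. subseq u v \<Longrightarrow> v \<in> D \<Longrightarrow> u \<in> D"
  shows "repr X D"
proof -
  define C where "C = lists X - D"
  define M where "M = {u \<in> C. \<forall>v\<in>C. subseq v u \<longrightarrow> v = u}"
  have MX: "M \<subseteq> lists X" unfolding M_def C_def by auto
  have finM: "finite M"
  proof (rule ccontr)
    assume "infinite M"
    then obtain f :: "nat \<Rightarrow> 'a list" where f: "inj f" "range f \<subseteq> M" using infinite_countable_subset by blast
    have "\<forall>i. f i \<in> lists X" using f(2) MX by auto
    then obtain i j where ij: "i < j" "subseq (f i) (f j)" using higman[OF fin] by blast
    have "f j \<in> M" "f i \<in> C" using f(2) unfolding M_def by auto
    then have "f i = f j" using ij(2) unfolding M_def by blast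
    with f(1) ij(1) show False by (auto dest: injD)
  qed
  have below: "\<exists>u\<in>M. subseq u v" if v: "v \<in> C" for v
  proof -
    define P where "P u = (u \<in> C \<and> subseq u v)" for u
    define u0 where "u0 = arg_min length P"
    have Pv: "P v" unfolding P_def using v by simp
    have Pu0: "P u0" unfolding u0_def using Pv by (rule arg_min_natI)
    have "u0 \<in> M" unfolding M_def
    proof (intro CollectI conjI ballI impI)
      show "u0 \<in> C" using Pu0 P_def by simp
      fix w assume w: "w \<in> C" "subseq w u0"
      then have "P w" unfolding P_def using Pu0 P_def subseq_order.order_trans by blast
      then have "length u0 \<le> length w" unfolding u0_def by (rule arg_min_nat_le)
      moreover have "length w \<le> length u0" using w(2) by (rule list_emb_length)
      ultimately show "w = u0" using w(2) subseq_same_length by (metis le_antisym)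
    qed
    then show ?thesis using Pu0 P_def by blast
  qed
  have "D = {v \<in> lists X. \<forall>u\<in>M. \<not> subseq u v}"
  proof
    show "D \<subseteq> {v \<in> lists X. \<forall>u\<in>M. \<not> subseq u v}"
    proof
      fix v assume v: "v \<in> D"
      have "\<not> subseq u v" if "u \<in> M" for u
      proof
        assume "subseq u v"
        then have "u \<in> D" using down v by blast
        moreover have "u \<in> C" using that unfolding M_def by simp
        ultimately show False unfolding C_def by simp
      qed
      then show "v \<in> {v \<in> lists X. \<forall>u\<in>M. \<not> subseq u v}" using v DX by auto
    qed
    show "{v \<in> lists X. \<forall>u\<in>M. \<not> subseq u v} \<subseteq> D"
    proof
      fix v assume v: "v \<in> {v \<in> lists X. \<forall>u\<in>M. \<not> subseq u v}"
      show "v \<in> D"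
      proof (rule ccontr)
        assume "v \<notin> D"
        then have "v \<in> C" using v unfolding C_def by simp
        then obtain u where "u \<in> M" "subseq u v" using below by blast
        then show False using v by blast
      qed
    qed
  qed
  then show ?thesis using repr_avoid_set[OF finM MX] by simp
qed

lemma downclosure_down: "subseq u v \<Longrightarrow> v \<in> downclosure L \<Longrightarrow> u \<in> downclosure L"
  unfolding downclosure_def using subseq_order.order_trans by blast

lemma downclosure_lists: "L \<subseteq> lists X \<Longrightarrow> downclosure L \<subseteq> lists X"
proof
  fix u assume L: "L \<subseteq> lists X" and "u \<in> downclosure L"
  then obtain v where v: "v \<in> L" "subseq u v" unfolding downclosure_def by blast
  then have "v \<in> lists X" using L by blast
  then show "u \<in> lists X" using v(2) by (auto elim!: list_emb_set)
qed

lemma N_of_witness: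
  assumes "finite X" "L \<subseteq> lists X"
  shows "\<exists>E. finite E \<and> (\<forall>e\<in>E. expr_over X e \<and> length e \<le> N_of X L) \<and> downclosure L = (\<Union>e\<in>E. expr_lang e)"
proof -
  have "repr X (downclosure L)"
    by (rule decomp[OF assms(1) downclosure_lists[OF assms(2)] downclosure_down])
  then obtain E where E: "finite E" "\<forall>e\<in>E. expr_over X e" "downclosure L = (\<Union>e\<in>E. expr_lang e)"
    unfolding repr_def by blast
  define K where "K = Max (insert 0 (length ` E))"
  have "\<forall>e\<in>E. expr_over X e \<and> length e \<le> K" unfolding K_def using E(1,2) by simp
  then have ex: "\<exists>E. finite E \<and> (\<forall>e\<in>E. expr_over X e \<and> length e \<le> K) \<and> downclosure L = (\<Union>e\<in>E. expr_lang e)"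
    using E by blast
  show ?thesis unfolding N_of_def by (rule LeastI_ex) (use ex in blast)
qed

lemma lpow_Suc: "lpow u (Suc k) = u @ lpow u k" by (simp add: lpow_def)
lemma lpow_Nil[simp]: "lpow [] k = []" by (simp add: lpow_def)
lemma lpow_set: "set (lpow u k) \<subseteq> set u" by (auto simp: lpow_def)

lemma sub_mid: "subseq (p @ v @ s) (p @ v @ t @ s)"
  unfolding subseq_append' by (rule subseq_drop_many) simp

lemma pump:
  assumes "u \<noteq> []" "v \<in> lists (set u)"
  shows "length e < k \<Longrightarrow> p @ lpow u k @ s \<in> expr_lang e \<Longrightarrow> p @ v @ s \<in> expr_lang e"
proof (induct e arbitrary: p k)
  case Nil
  then obtain k' where "k = Suc k'" by (cases k) auto
  then show ?case using Nil assms(1) by (simp add: lpow_Suc)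
next
  case (Cons f r)
  obtain k' where k: "k = Suc k'" using Cons(2) by (cases k) auto
  have lr: "length r < k'" using Cons(2) k by simp
  obtain a b where ab: "p @ lpow u k @ s = a @ b" "a \<in> factor_lang f" "b \<in> expr_lang r"
    using Cons(3) unfolding mem_cons by blast
  from ab(1) obtain us where "(a = p @ us \<and> us @ b = lpow u k @ s) \<or> (a @ us = p \<and> b = us @ lpow u k @ s)"
    using append_eq_append_conv2[of a b p "lpow u k @ s"] by metis
  then show ?case
  proof
    assume A: "a @ us = p \<and> b = us @ lpow u k @ s"
    then have "us @ v @ s \<in> expr_lang r" using Cons(1)[of k "us"] Cons(2) ab(3) A by simp
    then have "a @ (us @ v @ s) \<in> expr_lang (f # r)" using ab(2) unfolding mem_cons by blast
    moreover have "p @ v @ s = a @ (us @ v @ s)" using A by auto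
    ultimately show ?thesis by (simp only:)
  next
    assume A: "a = p @ us \<and> us @ b = lpow u k @ s"
    then have "us @ b = u @ (lpow u k' @ s)" using k by (simp add: lpow_Suc)
    then obtain us2 where "(us = u @ us2 \<and> us2 @ b = lpow u k' @ s) \<or> (us @ us2 = u \<and> b = us2 @ lpow u k' @ s)"
      using append_eq_append_conv2[of us b u "lpow u k' @ s"] by metis
    then show ?thesis
    proof
      assume B: "us @ us2 = u \<and> b = us2 @ lpow u k' @ s"
      then have "us2 @ v @ s \<in> expr_lang r" using Cons(1)[OF lr] ab(3) by simp
      then have "a @ (us2 @ v @ s) \<in> expr_lang (f # r)" using ab(2) unfolding mem_cons by blast
      moreover have "a @ (us2 @ v @ s) = p @ u @ v @ s" using A B by simp
      ultimately have "p @ u @ v @ s \<in> expr_lang (f # r)" by simp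
      moreover have "subseq (p @ v @ s) (p @ u @ v @ s)"
        unfolding subseq_append' by (rule subseq_drop_many) simp
      ultimately show ?thesis by (rule expr_down[rotated])
    next
      assume B: "us = u @ us2 \<and> us2 @ b = lpow u k' @ s"
      show ?thesis
      proof (cases f)
        case (Star Z)
        have "a \<in> lists Z" using ab(2) Star by simp
        then have "set u \<subseteq> Z" using A B by auto
        then have "p @ v @ u @ us2 \<in> lists Z" using assms(2) `a \<in> lists Z` A B by auto
        then have "(p @ v @ u @ us2) @ b \<in> expr_lang (f # r)" using ab(3) Star by (simp only: mem_starI)
        moreover have "(p @ v @ u @ us2) @ b = p @ v @ (lpow u k) @ s" using B k by (simp add: lpow_Suc)
        ultimately have "p @ v @ lpow u k @ s \<in> expr_lang (f # r)" by simp
        then show ?thesis using sub_mid by (rule expr_down[rotated])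
      next
        case (Opt x)
        have "a = [x] \<or> a = []" using ab(2) Opt by simp
        then have la: "length a \<le> 1" by auto
        have "a = p @ u @ us2" using A B by simp
        then have "length a = length p + length u + length us2" by simp
        with la have l1: "length a \<le> 1" "length a = length p + length u + length us2" by auto
        then have "length p + length u + length us2 \<le> 1" by linarith
        moreover have "length u \<ge> 1" using assms(1) by (cases u) auto
        ultimately have "length p = 0 \<and> length us2 = 0" by linarith
        then have "p = [] \<and> us2 = []" by simp
        then have "b = lpow u k' @ s" using B by simp
        then have "[] @ lpow u k' @ s \<in> expr_lang r" using ab(3) by simp
        then have "[] @ v @ s \<in> expr_lang r" using Cons(1)[OF lr] by blast
        then show ?thesis using `p = [] \<and> us2 = []` lang_cons_sub by simp
      qed
    qed
  qed
qed

fun gw :: "(nat \<Rightarrow> 'a list) \<Rightarrow> (nat \<Rightarrow> 'a list) \<Rightarrow> nat \<Rightarrow> 'a list" where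
  "gw B S 0 = B 0"
| "gw B S (Suc n) = gw B S n @ S (Suc n) @ B (Suc n)"

lemma test_gw: "test_word w Y x m n = gw (\<lambda>i. lpow (w (Y i)) m) (\<lambda>i. [x i]) n"
  by (induct n) auto

lemma gw_cong: "(\<forall>i\<le>n. B i = B' i) \<Longrightarrow> (\<forall>i\<le>n. S i = S' i) \<Longrightarrow> gw B S n = gw B' S' n"
  by (induct n) auto

lemma gw_split: "j \<le> n \<Longrightarrow> \<exists>p q. \<forall>B'. (\<forall>i. i \<noteq> j \<longrightarrow> B' i = B i) \<longrightarrow> gw B' S n = p @ B' j @ q"
proof (induct n)
  case 0 then show ?case by (intro exI[of _ "[]"]) auto
next
  case (Suc n)
  show ?case
  proof (cases "j = Suc n")
    case True
    show ?thesis
    proof (rule exI[of _ "gw B S n @ S (Suc n)"], rule exI[of _ "[]"], intro allI impI)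
      fix B' assume B': "\<forall>i. i \<noteq> j \<longrightarrow> B' i = B i"
      have "gw B' S n = gw B S n" by (rule gw_cong) (use B' True in auto)
      then show "gw B' S (Suc n) = (gw B S n @ S (Suc n)) @ B' j @ []" using True by simp
    qed
  next
    case False
    then have "j \<le> n" using Suc(2) by simp
    then obtain p q where pq: "\<forall>B'. (\<forall>i. i \<noteq> j \<longrightarrow> B' i = B i) \<longrightarrow> gw B' S n = p @ B' j @ q" using Suc(1) by blast
    show ?thesis
    proof (rule exI[of _ p], rule exI[of _ "q @ S (Suc n) @ B (Suc n)"], intro allI impI)
      fix B' assume B': "\<forall>i. i \<noteq> j \<longrightarrow> B' i = B i"
      then have "gw B' S n = p @ B' j @ q" "B' (Suc n) = B (Suc n)" using pq False by auto
      then show "gw B' S (Suc n) = p @ B' j @ q @ S (Suc n) @ B (Suc n)" by simp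
    qed
  qed
qed

lemma replace:
  assumes "length e < m" "gw B S n \<in> expr_lang e" "B j = lpow u m" "j \<le> n" "v \<in> lists (set u)"
  shows "gw (B(j := v)) S n \<in> expr_lang e"
proof (cases "u = []")
  case True
  then have "v = []" using assms(5) by auto
  then have "B(j := v) = B" using assms(3) True by auto
  then show ?thesis using assms(2) by simp
next
  case False
  obtain p q where pq: "\<forall>B'. (\<forall>i. i \<noteq> j \<longrightarrow> B' i = B i) \<longrightarrow> gw B' S n = p @ B' j @ q"
    using gw_split[OF assms(4)] by blast
  have "gw B S n = p @ lpow u m @ q" using pq[rule_format, of B] assms(3) by simp
  then have "p @ lpow u m @ q \<in> expr_lang e" using assms(2) by simp
  then have "p @ v @ q \<in> expr_lang e" using pump[OF False assms(5) assms(1)] by blast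
  moreover have "gw (B(j := v)) S n = p @ v @ q" using pq[rule_format, of "B(j := v)"] by simp
  ultimately show ?thesis by simp
qed

lemma gw_sub: "(\<forall>i. subseq (T i) (S i)) \<Longrightarrow> subseq (gw V T n) (gw V S n)"
  by (induct n) (auto intro!: list_emb_append_mono)

lemma mem_append: "w \<in> expr_lang (xs @ ys) \<longleftrightarrow> (\<exists>a b. w = a @ b \<and> a \<in> expr_lang xs \<and> b \<in> expr_lang ys)"
proof (induct xs arbitrary: w)
  case Nil then show ?case by simp
next
  case (Cons f xs)
  show ?case
  proof
    assume "w \<in> expr_lang ((f # xs) @ ys)"
    then have "w \<in> expr_lang (f # (xs @ ys))" by simp
    then obtain c d where cd: "w = c @ d" "c \<in> factor_lang f" "d \<in> expr_lang (xs @ ys)" unfolding mem_cons by blast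
    then obtain a b where ab: "d = a @ b" "a \<in> expr_lang xs" "b \<in> expr_lang ys" using Cons by blast
    have "c @ a \<in> expr_lang (f # xs)" using cd(2) ab(2) unfolding mem_cons by blast
    moreover have "w = (c @ a) @ b" using cd(1) ab(1) by simp
    ultimately show "\<exists>a b. w = a @ b \<and> a \<in> expr_lang (f # xs) \<and> b \<in> expr_lang ys" using ab(3) by blast
  next
    assume "\<exists>a b. w = a @ b \<and> a \<in> expr_lang (f # xs) \<and> b \<in> expr_lang ys"
    then obtain a b where ab: "w = a @ b" "a \<in> expr_lang (f # xs)" "b \<in> expr_lang ys" by blast
    then obtain c d where cd: "a = c @ d" "c \<in> factor_lang f" "d \<in> expr_lang xs" unfolding mem_cons by blast
    have "d @ b \<in> expr_lang (xs @ ys)" using Cons cd(3) ab(3) by blast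
    then have "c @ (d @ b) \<in> expr_lang (f # (xs @ ys))" using cd(2) unfolding mem_cons by blast
    moreover have "w = c @ (d @ b)" using ab(1) cd(1) by simp
    ultimately show "w \<in> expr_lang ((f # xs) @ ys)" by simp
  qed
qed

lemma ideal_char:
  "W \<in> expr_lang (ideal_expr Y x n) \<Longrightarrow>
   \<exists>V T. (\<forall>i\<le>n. V i \<in> lists (Y i)) \<and> (\<forall>i. T i = [x i] \<or> T i = []) \<and> W = gw V T n"
proof (induct n arbitrary: W)
  case 0
  then have "W \<in> expr_lang [Star (Y 0)]" by simp
  then obtain a b where "W = a @ b" "a \<in> lists (Y 0)" "b \<in> expr_lang []" unfolding mem_star by blast
  then have "W \<in> lists (Y 0)" by simp
  then show ?case by (intro exI[of _ "\<lambda>i. W"] exI[of _ "\<lambda>i. [x i]"]) auto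
next
  case (Suc n)
  then have "W \<in> expr_lang (ideal_expr Y x n @ [Opt (x (Suc n)), Star (Y (Suc n))])" by simp
  then obtain a b where ab: "W = a @ b" "a \<in> expr_lang (ideal_expr Y x n)" "b \<in> expr_lang [Opt (x (Suc n)), Star (Y (Suc n))]"
    unfolding mem_append by blast
  obtain V T where VO: "\<forall>i\<le>n. V i \<in> lists (Y i)" "\<forall>i. T i = [x i] \<or> T i = []" "a = gw V T n"
    using Suc(1)[OF ab(2)] by blast
  obtain o1 c where oc: "b = o1 @ c" "o1 = [x (Suc n)] \<or> o1 = []" "c \<in> lists (Y (Suc n))"
  proof -
    from ab(3) obtain o1 d where od: "b = o1 @ d" "o1 \<in> factor_lang (Opt (x (Suc n)))" "d \<in> expr_lang [Star (Y (Suc n))]"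
      unfolding mem_cons by blast
    from od(3) obtain c e where "d = c @ e" "c \<in> lists (Y (Suc n))" "e \<in> expr_lang []" unfolding mem_star by blast
    then have "d = c" "c \<in> lists (Y (Suc n))" by auto
    then show ?thesis using that od by auto
  qed
  define V' where "V' = V(Suc n := c)"
  define T' where "T' = T(Suc n := o1)"
  have "gw V' T' n = gw V T n" by (rule gw_cong) (auto simp: V'_def T'_def)
  then have "W = gw V' T' (Suc n)" using ab(1) VO(3) oc(1) by (simp add: V'_def T'_def)
  moreover have "\<forall>i\<le>Suc n. V' i \<in> lists (Y i)" using VO(1) oc(3) by (auto simp: V'_def le_Suc_eq)
  moreover have "\<forall>i. T' i = [x i] \<or> T' i = []" using VO(2) oc(2) by (auto simp: T'_def)
  ultimately show ?case by blast
qed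

lemma ideal_mem:
  "(\<forall>i\<le>n. V i \<in> lists (Y i)) \<Longrightarrow> gw V (\<lambda>i. [x i]) n \<in> expr_lang (ideal_expr Y x n)"
proof (induct n)
  case 0
  then have "V 0 @ [] \<in> expr_lang [Star (Y 0)]" by (intro mem_starI) auto
  then show ?case by simp
next
  case (Suc n)
  then have IH: "gw V (\<lambda>i. [x i]) n \<in> expr_lang (ideal_expr Y x n)" by simp
  have "V (Suc n) @ [] \<in> expr_lang [Star (Y (Suc n))]" using Suc(2) by (intro mem_starI) auto
  then have "x (Suc n) # (V (Suc n) @ []) \<in> expr_lang [Opt (x (Suc n)), Star (Y (Suc n))]" by (rule mem_optI)
  then have "gw V (\<lambda>i. [x i]) n @ (x (Suc n) # (V (Suc n) @ [])) \<in> expr_lang (ideal_expr Y x n @ [Opt (x (Suc n)), Star (Y (Suc n))])"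
    using IH unfolding mem_append by blast
  then show ?case by simp
qed

lemma iterate:
  assumes e: "length e < m" and t: "gw (\<lambda>i. lpow (w (Y i)) m) S n \<in> expr_lang e"
    and V: "\<forall>i\<le>n. V i \<in> lists (set (w (Y i)))"
  shows "k \<le> Suc n \<Longrightarrow> gw (\<lambda>i. if i < k then V i else lpow (w (Y i)) m) S n \<in> expr_lang e"
proof (induct k)
  case 0 then show ?case using t by simp
next
  case (Suc k)
  let ?B = "\<lambda>i. if i < k then V i else lpow (w (Y i)) m"
  have kn: "k \<le> n" using Suc(2) by simp
  have "gw ?B S n \<in> expr_lang e" using Suc by simp
  then have "gw (?B(k := V k)) S n \<in> expr_lang e"
    by (rule replace[OF e _ _ kn]) (use V kn in auto)
  moreover have "?B(k := V k) = (\<lambda>i. if i < Suc k then V i else lpow (w (Y i)) m)" by (auto simp: fun_eq_iff)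
  ultimately show ?case by simp
qed

theorem mainTheorem2:
  fixes X :: "'a set" and L :: "'a list set"
    and Y :: "nat \<Rightarrow> 'a set" and x :: "nat \<Rightarrow> 'a" and n m :: nat
    and w :: "'a set \<Rightarrow> 'a list"
  assumes "finite X"
    and "L \<subseteq> lists X"
    and "\<forall>i\<le>n. Y i \<subseteq> X"
    and "\<forall>i\<in>{1..n}. x i \<in> X"
    and "\<forall>Z\<subseteq>X. distinct (w Z) \<and> set (w Z) = Z"
    and "m \<ge> N_of X L + 1"
  shows "(expr_lang (ideal_expr Y x n) \<subseteq> downclosure L
            \<longleftrightarrow> (\<forall>m'\<ge>N_of X L + 1. test_word w Y x m' n \<in> downclosure L))
       \<and> ((\<forall>m'\<ge>N_of X L + 1. test_word w Y x m' n \<in> downclosure L)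
            \<longleftrightarrow> test_word w Y x m n \<in> downclosure L)"
proof -
  have setw: "set (w (Y i)) = Y i" if "i \<le> n" for i
  proof -
    have "Y i \<subseteq> X" using assms(3) that by simp
    then show ?thesis using assms(5) by simp
  qed
  have AB: "(\<forall>m'\<ge>N_of X L + 1. test_word w Y x m' n \<in> downclosure L)"
    if A: "expr_lang (ideal_expr Y x n) \<subseteq> downclosure L"
  proof (intro allI impI)
    fix m' :: nat
    have "\<forall>i\<le>n. lpow (w (Y i)) m' \<in> lists (Y i)"
    proof (intro allI impI)
      fix i assume "i \<le> n"
      then show "lpow (w (Y i)) m' \<in> lists (Y i)" using lpow_set[of "w (Y i)" m'] setw[of i] by auto
    qed
    then have "gw (\<lambda>i. lpow (w (Y i)) m') (\<lambda>i. [x i]) n \<in> expr_lang (ideal_expr Y x n)" by (rule ideal_mem)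
    then have "gw (\<lambda>i. lpow (w (Y i)) m') (\<lambda>i. [x i]) n \<in> downclosure L" using A by (rule subsetD[rotated])
    then show "test_word w Y x m' n \<in> downclosure L" unfolding test_gw .
  qed
  have BC: "test_word w Y x m n \<in> downclosure L" if B: "\<forall>m'\<ge>N_of X L + 1. test_word w Y x m' n \<in> downclosure L"
  proof -
    have "m \<ge> N_of X L + 1" by (rule assms(6))
    then show ?thesis using B by simp
  qed
  have CA: "expr_lang (ideal_expr Y x n) \<subseteq> downclosure L" if C: "test_word w Y x m n \<in> downclosure L"
  proof
    fix W assume W: "W \<in> expr_lang (ideal_expr Y x n)"
    obtain E where E: "finite E" "\<forall>e\<in>E. expr_over X e \<and> length e \<le> N_of X L"
      "downclosure L = (\<Union>e\<in>E. expr_lang e)" using N_of_witness[OF assms(1,2)] by blast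
    then obtain e where e: "e \<in> E" "test_word w Y x m n \<in> expr_lang e" using C by blast
    have le: "length e < m" using E(2) e(1) assms(6) by fastforce
    have t: "gw (\<lambda>i. lpow (w (Y i)) m) (\<lambda>i. [x i]) n \<in> expr_lang e" using e(2) unfolding test_gw .
    obtain V T where VT: "\<forall>i\<le>n. V i \<in> lists (Y i)" "\<forall>i. T i = [x i] \<or> T i = []" "W = gw V T n"
      using ideal_char[OF W] by blast
    have V': "\<forall>i\<le>n. V i \<in> lists (set (w (Y i)))" using VT(1) setw by simp
    have "gw (\<lambda>i. if i < Suc n then V i else lpow (w (Y i)) m) (\<lambda>i. [x i]) n \<in> expr_lang e"
      using iterate[where w=w and Y=Y and m=m and S="\<lambda>i. [x i]" and n=n and V=V and e=e and k="Suc n"] le t V' by simp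
    moreover have "gw (\<lambda>i. if i < Suc n then V i else lpow (w (Y i)) m) (\<lambda>i. [x i]) n = gw V (\<lambda>i. [x i]) n"
      by (rule gw_cong) auto
    ultimately have "gw V (\<lambda>i. [x i]) n \<in> expr_lang e" by simp
    moreover have "subseq (gw V T n) (gw V (\<lambda>i. [x i]) n)"
      proof (rule gw_sub, rule allI)
      fix i show "subseq (T i) [x i]" using VT(2)[rule_format, of i] by auto
    qed
    ultimately have "W \<in> expr_lang e" using VT(3) expr_down by blast
    then show "W \<in> downclosure L" using E(3) e(1) by blast
  qed
  show ?thesis using AB BC CA by blast
qed

end
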